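(* Let $k\ge 2$ and $G=\Theta(2,2,2k)$ with end vertices $u$ and $v$. Let $m\ge 3$ and let $L$ be an $m$-assignment for $G$ with $L(u)=L(v)$. Then $P(G,L)\ge P(G,m)$.
   Context: $\Theta(l_1,l_2,l_3)$ denotes two end vertices joined by three internally disjoint paths of lengths $l_1,l_2,l_3$. An $m$-assignment $L$ assigns to each vertex $w$ a set $L(w)$ of $m$ colors; $P(G,L)$ is the number of proper colorings $f$ of $G$ with $f(w)\in L(w)$ for all $w$. $P(G,m)$ is the chromatic polynomial of $G$. *)

theory Defs
  imports Main
begin

text \<open>Vertex (0,0) is the end vertex u, (0,1) is the end
  vertex v; for path i (i = 1,2,3) of length l_i the internal vertices are (i,j), 1 <= j < l_i.
  theta_pv ls i j is the j-th vertex on path i (j = 0 .. l_i).\<close>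

definition theta_pv :: "(nat \<Rightarrow> nat) \<Rightarrow> nat \<Rightarrow> nat \<Rightarrow> nat \<times> nat" where
  "theta_pv ls i j = (if j = 0 then (0,0) else if j = ls i then (0,1) else (i,j))"

definition theta_lens :: "nat \<Rightarrow> nat \<Rightarrow> nat \<Rightarrow> nat \<Rightarrow> nat" where
  "theta_lens l1 l2 l3 i = (if i = 1 then l1 else if i = 2 then l2 else l3)"

definition theta_V :: "nat \<Rightarrow> nat \<Rightarrow> nat \<Rightarrow> (nat \<times> nat) set" where
  "theta_V l1 l2 l3 = {theta_pv (theta_lens l1 l2 l3) i j | i j.
      i \<in> {1,2,3} \<and> j \<le> theta_lens l1 l2 l3 i}"

definition theta_E :: "nat \<Rightarrow> nat \<Rightarrow> nat \<Rightarrow> (nat \<times> nat) set set" where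
  "theta_E l1 l2 l3 = {{theta_pv (theta_lens l1 l2 l3) i j, theta_pv (theta_lens l1 l2 l3) i (Suc j)} | i j.
      i \<in> {1,2,3} \<and> j < theta_lens l1 l2 l3 i}"

abbreviation theta_u :: "nat \<times> nat" where "theta_u \<equiv> (0,0)"
abbreviation theta_v :: "nat \<times> nat" where "theta_v \<equiv> (0,1)"

definition proper_list_colorings :: "'a set \<Rightarrow> 'a set set \<Rightarrow> ('a \<Rightarrow> 'c set) \<Rightarrow> ('a \<Rightarrow> 'c) set" where
  "proper_list_colorings V E L = {f. (\<forall>w\<in>V. f w \<in> L w) \<and> (\<forall>w. w \<notin> V \<longrightarrow> f w = undefined)
      \<and> (\<forall>x y. {x,y} \<in> E \<longrightarrow> f x \<noteq> f y)}"

definition list_color_count :: "'a set \<Rightarrow> 'a set set \<Rightarrow> ('a \<Rightarrow> 'c set) \<Rightarrow> nat" where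
  "list_color_count V E L = card (proper_list_colorings V E L)"

definition chrom_poly :: "'a set \<Rightarrow> 'a set set \<Rightarrow> nat \<Rightarrow> nat" where
  "chrom_poly V E m = list_color_count V E (\<lambda>_. {0..<m::nat})"

definition is_m_assignment :: "'a set \<Rightarrow> nat \<Rightarrow> ('a \<Rightarrow> 'c set) \<Rightarrow> bool" where
  "is_m_assignment V m L \<longleftrightarrow> (\<forall>w\<in>V. finite (L w) \<and> card (L w) = m)"

end

theory Submission
  imports Defs
begin


fun wc :: "'c set list \<Rightarrow> 'c \<Rightarrow> 'c \<Rightarrow> nat" where
  "wc [] a b = (if a = b then 0 else 1)"
| "wc (X # Xs) a b = (\<Sum>c\<in>X - {a}. wc Xs c b)"

fun pc :: "'c set list \<Rightarrow> 'c \<Rightarrow> nat" where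
  "pc [] a = 1"
| "pc (X # Xs) a = (\<Sum>c\<in>X - {a}. pc Xs c)"

fun cc :: "'a list \<Rightarrow> nat" where
  "cc (x # y # zs) = (if x = y then 0 else 1) + cc (y # zs)"
| "cc _ = 0"

fun ABw :: "nat \<Rightarrow> nat \<Rightarrow> nat \<times> nat" where
  "ABw m 0 = (0, 1)"
| "ABw m (Suc i) = ((m-1) * snd (ABw m i), fst (ABw m i) + (m-2) * snd (ABw m i))"

lemma wc_const:
  assumes "finite S" "card S = m" "p \<in> S" "q \<in> S"
  shows "wc (replicate i S) p q = (if p = q then fst (ABw m i) else snd (ABw m i))"
  using assms(3)
proof (induction i arbitrary: p)
  case 0
  then show ?case by simp
next
  case (Suc i)
  have eq: "wc (replicate (Suc i) S) p q = (\<Sum>c\<in>S - {p}. (if c = q then fst (ABw m i) else snd (ABw m i)))"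
    using Suc by (auto intro!: sum.cong)
  show ?case
  proof (cases "p = q")
    case True
    have "(\<Sum>c\<in>S - {p}. (if c = q then fst (ABw m i) else snd (ABw m i))) = (\<Sum>c\<in>S - {p}. snd (ABw m i))"
      using True by (auto intro!: sum.cong)
    also have "\<dots> = (m-1) * snd (ABw m i)" using assms Suc.prems by (simp add: card_Diff_singleton)
    finally show ?thesis using eq True by simp
  next
    case False
    have qin: "q \<in> S - {p}" using False assms by auto
    have "(\<Sum>c\<in>S - {p}. (if c = q then fst (ABw m i) else snd (ABw m i)))
        = fst (ABw m i) + (\<Sum>c\<in>S - {p} - {q}. (if c = q then fst (ABw m i) else snd (ABw m i)))"
      using qin assms by (simp add: sum.remove)
    also have "(\<Sum>c\<in>S - {p} - {q}. (if c = q then fst (ABw m i) else snd (ABw m i))) = (\<Sum>c\<in>S - {p} - {q}. snd (ABw m i))"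
      by (auto intro!: sum.cong)
    also have "\<dots> = (m-2) * snd (ABw m i)" using assms Suc.prems qin
      by (simp add: card_Diff_singleton numeral_2_eq_2)
    finally show ?thesis using eq False by simp
  qed
qed

lemma ABw_rel: "m \<ge> 2 \<Longrightarrow> (if even i then snd (ABw m i) = fst (ABw m i) + 1 else fst (ABw m i) = snd (ABw m i) + 1)"
proof (induction i)
  case 0 then show ?case by simp
next
  case (Suc i)
  show ?case
  proof (cases "even i")
    case True
    with Suc have h: "snd (ABw m i) = fst (ABw m i) + 1" by simp
    have "(m - 1) * snd (ABw m i) = snd (ABw m i) + (m-2) * snd (ABw m i)"
      using Suc.prems by (cases m) (auto simp: algebra_simps numeral_2_eq_2)
    then show ?thesis using True h by simp
  next
    case False
    with Suc have h: "fst (ABw m i) = snd (ABw m i) + 1" by simp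
    have "(m - 1) * snd (ABw m i) = snd (ABw m i) + (m-2) * snd (ABw m i)"
      using Suc.prems by (cases m) (auto simp: algebra_simps numeral_2_eq_2)
    then show ?thesis using False h by simp
  qed
qed

lemma ABw_sum: "m \<ge> 2 \<Longrightarrow> fst (ABw m i) + (m-1) * snd (ABw m i) = (m-1)^(Suc i)"
proof (induction i)
  case 0 then show ?case by simp
next
  case (Suc i)
  have "fst (ABw m (Suc i)) + (m-1) * snd (ABw m (Suc i)) = (m-1) * (snd (ABw m i) + fst (ABw m i) + (m-2) * snd (ABw m i))"
    by (simp add: algebra_simps)
  also have "snd (ABw m i) + fst (ABw m i) + (m-2) * snd (ABw m i) = fst (ABw m i) + (m-1) * snd (ABw m i)"
    using Suc.prems by (cases m) (auto simp: algebra_simps numeral_2_eq_2)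
  finally show ?case using Suc by simp
qed

lemma extend_bij:
  assumes "finite X" "finite S" "card X = card S" "inj_on \<phi> Y" "\<phi> ` Y \<subseteq> S"
  shows "\<exists>\<phi>'. bij_betw \<phi>' X S \<and> (\<forall>c\<in>X \<inter> Y. \<phi>' c = \<phi> c)"
proof -
  let ?A = "X \<inter> Y"
  let ?B = "\<phi> ` ?A"
  have fA: "finite ?A" using assms by auto
  have injA: "inj_on \<phi> ?A" using assms(4) by (rule inj_on_subset) auto
  have cB: "card ?B = card ?A" using injA by (simp add: card_image)
  have BS: "?B \<subseteq> S" using assms by auto
  have "card (X - ?A) = card (S - ?B)"
    using assms fA cB BS by (simp add: card_Diff_subset finite_subset)
  then obtain g where g: "bij_betw g (X - ?A) (S - ?B)"
    using finite_same_card_bij assms by (meson finite_Diff)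
  define \<phi>' where "\<phi>' = (\<lambda>c. if c \<in> ?A then \<phi> c else g c)"
  have b1: "bij_betw \<phi>' ?A ?B"
    unfolding bij_betw_def using injA by (auto simp: \<phi>'_def inj_on_def image_def)
  have b2: "bij_betw \<phi>' (X - ?A) (S - ?B)"
    using g unfolding \<phi>'_def by (rule bij_betw_cong[THEN iffD1, rotated]) auto
  have "bij_betw \<phi>' (?A \<union> (X - ?A)) (?B \<union> (S - ?B))"
    by (rule bij_betw_combine[OF b1 b2]) auto
  moreover have "?A \<union> (X - ?A) = X" "?B \<union> (S - ?B) = S" using BS by auto
  ultimately have "bij_betw \<phi>' X S" by simp
  then show ?thesis by (auto simp: \<phi>'_def)
qed

lemma transport:
  assumes "finite S" "card S = m" "S \<noteq> {}" "\<forall>X\<in>set Xs. finite X \<and> card X = m"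
    "inj_on \<phi> Y" "\<phi> ` Y \<subseteq> S"
  shows "\<exists>\<psi>. (\<forall>b. \<psi> b \<in> S) \<and> (\<forall>a\<in>Y. \<forall>b. wc (replicate (length Xs) S) (\<phi> a) (\<psi> b) \<le> wc Xs a b)"
  using assms(4-6)
proof (induction Xs arbitrary: Y \<phi>)
  case Nil
  obtain s0 where s0: "s0 \<in> S" using assms(3) by auto
  define \<psi> where "\<psi> = (\<lambda>b. if b \<in> Y then \<phi> b else s0)"
  have "\<forall>b. \<psi> b \<in> S" using Nil s0 by (auto simp: \<psi>_def)
  moreover have "\<forall>a\<in>Y. \<forall>b. wc (replicate (length []) S) (\<phi> a) (\<psi> b) \<le> wc [] a b"
    by (auto simp: \<psi>_def)
  ultimately show ?case by blast
next
  case (Cons X Xs)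
  have fX: "finite X" "card X = m" using Cons.prems by auto
  obtain \<phi>' where bj: "bij_betw \<phi>' X S" and agree: "\<forall>c\<in>X \<inter> Y. \<phi>' c = \<phi> c"
    using extend_bij[of X S \<phi> Y] fX assms Cons.prems by auto
  have ij: "inj_on \<phi>' X" "\<phi>' ` X \<subseteq> S" using bj by (auto simp: bij_betw_def)
  have "\<exists>\<psi>. (\<forall>b. \<psi> b \<in> S) \<and> (\<forall>a\<in>X. \<forall>b. wc (replicate (length Xs) S) (\<phi>' a) (\<psi> b) \<le> wc Xs a b)"
    apply (rule Cons.IH) using Cons.prems ij by auto
  then obtain \<psi> where psiS: "\<forall>b. \<psi> b \<in> S"
    and ih: "\<forall>a\<in>X. \<forall>b. wc (replicate (length Xs) S) (\<phi>' a) (\<psi> b) \<le> wc Xs a b"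
    by blast
  have "\<forall>a\<in>Y. \<forall>b. wc (replicate (length (X # Xs)) S) (\<phi> a) (\<psi> b) \<le> wc (X # Xs) a b"
  proof (intro ballI allI)
    fix a b assume aY: "a \<in> Y"
    let ?R = "replicate (length Xs) S"
    have bj2: "bij_betw \<phi>' {c\<in>X. \<phi>' c \<noteq> \<phi> a} (S - {\<phi> a})"
      using bj unfolding bij_betw_def inj_on_def by auto
    have "wc (replicate (length (X # Xs)) S) (\<phi> a) (\<psi> b) = (\<Sum>d\<in>S - {\<phi> a}. wc ?R d (\<psi> b))"
      by simp
    also have "\<dots> = (\<Sum>c\<in>{c\<in>X. \<phi>' c \<noteq> \<phi> a}. wc ?R (\<phi>' c) (\<psi> b))"
      using sum.reindex_bij_betw[OF bj2, of "\<lambda>d. wc ?R d (\<psi> b)"] by simp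
    also have "\<dots> \<le> (\<Sum>c\<in>X - {a}. wc ?R (\<phi>' c) (\<psi> b))"
      apply (rule sum_mono2)
      using fX aY agree by auto
    also have "\<dots> \<le> (\<Sum>c\<in>X - {a}. wc Xs c b)"
      apply (rule sum_mono) using ih by auto
    also have "\<dots> = wc (X # Xs) a b" by simp
    finally show "wc (replicate (length (X # Xs)) S) (\<phi> a) (\<psi> b) \<le> wc (X # Xs) a b" .
  qed
  then show ?case using psiS by blast
qed

lemma sum_remove0:
  assumes "finite A"
  shows "(\<Sum>x\<in>A - {a}. f x) = (\<Sum>x\<in>A. if x = a then 0 else (f x :: nat))"
proof (cases "a \<in> A")
  case True
  have "(\<Sum>x\<in>A. if x = a then 0 else f x) = (if a = a then 0 else f a) + (\<Sum>x\<in>A - {a}. if x = a then 0 else f x)"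
    by (rule sum.remove[OF assms True])
  also have "(\<Sum>x\<in>A - {a}. if x = a then 0 else f x) = (\<Sum>x\<in>A - {a}. f x)" by (rule sum.cong) auto
  finally show ?thesis by simp
next
  case False
  then show ?thesis by (auto intro!: sum.cong)
qed

lemma sum_wc: "finite E \<Longrightarrow> (\<Sum>b\<in>E. wc Xs a b) = pc (Xs @ [E]) a"
proof (induction Xs arbitrary: a)
  case Nil
  have "(\<Sum>b\<in>E. wc [] a b) = (\<Sum>b\<in>E. if b = a then 0 else 1)" by (auto intro!: sum.cong)
  also have "\<dots> = (\<Sum>b\<in>E - {a}. 1)"
    by (rule sum_remove0[symmetric, OF Nil])
  finally show ?case by simp
next
  case (Cons X Xs)
  have "(\<Sum>b\<in>E. wc (X # Xs) a b) = (\<Sum>c\<in>X - {a}. \<Sum>b\<in>E. wc Xs c b)"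
    by (simp add: sum.swap[of _ E])
  also have "\<dots> = pc ((X # Xs) @ [E]) a" using Cons by simp
  finally show ?case .
qed

lemma pc_lb: "\<forall>X\<in>set Xs. finite X \<and> card X = m \<Longrightarrow> pc Xs a \<ge> (m-1)^length Xs"
proof (induction Xs arbitrary: a)
  case Nil then show ?case by simp
next
  case (Cons X Xs)
  have "(m-1)^length (X#Xs) = (m-1) * (m-1)^length Xs" by simp
  also have "\<dots> \<le> card (X - {a}) * (m-1)^length Xs"
    using Cons.prems by (intro mult_right_mono) (auto simp: card_Diff_singleton_if)
  also have "\<dots> = (\<Sum>c\<in>X - {a}. (m-1)^length Xs)" by simp
  also have "\<dots> \<le> (\<Sum>c\<in>X - {a}. pc Xs c)" by (rule sum_mono) (use Cons in auto)
  finally show ?case by simp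
qed

definition Pt :: "'c set \<Rightarrow> 'c set list \<Rightarrow> nat" where
  "Pt X Xs = (\<Sum>c\<in>X. pc Xs c)"

lemma aux1: "m \<ge> 1 \<Longrightarrow> (m-1)*p + p \<le> m*(p::nat)" by (cases m) auto

lemma Pt_step:
  assumes "finite X" "card X = m" "finite X1" "card X1 = m" "\<forall>Z\<in>set Xs. finite Z \<and> card Z = m"
  shows "Pt X (X1 # Xs) \<ge> (m-1) * Pt X1 Xs + (if X \<noteq> X1 then (m-1)^length Xs else 0)"
proof -
  have "Pt X (X1 # Xs) = (\<Sum>c\<in>X. \<Sum>d\<in>X1. if d = c then 0 else pc Xs d)"
    unfolding Pt_def pc.simps by (rule sum.cong[OF refl], rule sum_remove0[OF assms(3)])
  also have "\<dots> = (\<Sum>d\<in>X1. \<Sum>c\<in>X. if d = c then 0 else pc Xs d)" by (rule sum.swap)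
  also have "\<dots> = (\<Sum>d\<in>X1. card (X - {d}) * pc Xs d)"
  proof (rule sum.cong[OF refl])
    fix d
    have "(\<Sum>c\<in>X. if d = c then 0 else pc Xs d) = (\<Sum>c\<in>X - {d}. pc Xs d)"
      using assms by (subst sum_remove0) (auto intro!: sum.cong)
    then show "(\<Sum>c\<in>X. if d = c then 0 else pc Xs d) = card (X - {d}) * pc Xs d" by simp
  qed
  finally have eq: "Pt X (X1 # Xs) = (\<Sum>d\<in>X1. card (X - {d}) * pc Xs d)" .
  have "(\<Sum>d\<in>X1. card (X - {d}) * pc Xs d) \<ge> (\<Sum>d\<in>X1. (m-1) * pc Xs d + (if d \<notin> X then pc Xs d else 0))"
    apply (rule sum_mono)
    subgoal premises pr for d
    proof (cases "d \<in> X")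
      case True then show ?thesis using assms by (simp add: card_Diff_singleton)
    next
      case False
      have "m \<ge> 1" using assms pr card_gt_0_iff[of X1] by auto
      then show ?thesis using False assms aux1[of m "pc Xs d"] by simp
    qed
    done
  moreover have "(\<Sum>d\<in>X1. (m-1) * pc Xs d + (if d \<notin> X then pc Xs d else 0)) = (m-1) * Pt X1 Xs + (\<Sum>d\<in>X1. if d \<notin> X then pc Xs d else 0)"
    by (simp add: sum.distrib Pt_def sum_distrib_left)
  moreover have "(\<Sum>d\<in>X1. if d \<notin> X then pc Xs d else 0) \<ge> (if X \<noteq> X1 then (m-1)^length Xs else 0)"
  proof (cases "X = X1")
    case False
    have "\<not> X1 \<subseteq> X"
    proof
      assume sub: "X1 \<subseteq> X" then have "X1 = X" using card_subset_eq[OF assms(1) sub] assms by simp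
      then show False using False by simp
    qed
    then obtain d where d: "d \<in> X1" "d \<notin> X" by auto
    have "(m-1)^length Xs \<le> pc Xs d" by (rule pc_lb[OF assms(5)])
    also have "\<dots> = (if d \<notin> X then pc Xs d else 0)" using d by simp
    also have "\<dots> \<le> (\<Sum>d\<in>X1. if d \<notin> X then pc Xs d else 0)"
      by (rule member_le_sum) (use d assms in auto)
    finally show ?thesis using False by simp
  qed simp
  ultimately show ?thesis using eq by linarith
qed

lemma Pt_lb:
  assumes "finite X" "card X = m" "\<forall>Z\<in>set Xs. finite Z \<and> card Z = m"
  shows "Pt X Xs \<ge> m * (m-1)^length Xs + cc (X # Xs) * (m-1)^(length Xs - 1)"
  using assms
proof (induction Xs arbitrary: X)
  case Nil then show ?case by (simp add: Pt_def)
next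
  case (Cons X1 Xs)
  have ih: "Pt X1 Xs \<ge> m * (m-1)^length Xs + cc (X1 # Xs) * (m-1)^(length Xs - 1)"
    using Cons by auto
  have st: "Pt X (X1 # Xs) \<ge> (m-1) * Pt X1 Xs + (if X \<noteq> X1 then (m-1)^length Xs else 0)"
    using Pt_step[of X m X1 Xs] Cons.prems by auto
  have "(m-1) * (cc (X1 # Xs) * (m-1)^(length Xs - 1)) = cc (X1 # Xs) * (m-1)^length Xs"
    by (cases Xs) auto
  then have "(m-1) * Pt X1 Xs \<ge> m * (m-1)^length (X1#Xs) + cc (X1 # Xs) * (m-1)^length Xs"
    using mult_left_mono[OF ih, of "m-1"] by (simp add: algebra_simps)
  then have A: "(m-1) * Pt X1 Xs \<ge> m * (m-1)^length (X1#Xs) + cc (X1 # Xs) * (m-1)^(length (X1#Xs) - 1)"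
    by simp
  have B: "cc (X # X1 # Xs) * (m-1)^(length (X1#Xs) - 1) = (if X = X1 then 0 else (m-1)^length Xs) + cc (X1 # Xs) * (m-1)^(length (X1#Xs) - 1)"
    by (simp add: distrib_right)
  show ?case
  proof (cases "X = X1")
    case True
    then show ?thesis apply (subst B) using A st by (simp only: if_True if_False simp_thms)
  next
    case False
    then show ?thesis apply (subst B) using A st by (simp only: if_True if_False simp_thms)
  qed
qed

lemma cc_split: "cc (x # xs @ y # ys) = cc (x # xs @ [y]) + cc (y # ys)"
  by (induction xs arbitrary: x) auto

lemma cc_pos: "x \<noteq> y \<Longrightarrow> cc (x # xs @ [y]) \<ge> 1"
  by (induction xs arbitrary: x) auto

lemma cc_two:
  assumes "X \<in> set Xs" "X \<noteq> S"
  shows "cc (S # Xs @ [S]) \<ge> 2"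
proof -
  obtain as bs where "Xs = as @ X # bs" using split_list[OF assms(1)] by blast
  then have "cc (S # Xs @ [S]) = cc (S # as @ [X]) + cc (X # bs @ [S])"
    using cc_split[of S as X "bs @ [S]"] by simp
  moreover have "cc (S # as @ [X]) \<ge> 1" "cc (X # bs @ [S]) \<ge> 1" using assms cc_pos by metis+
  ultimately show ?thesis by simp
qed


lemma arith1: "(2*(x+3)-3)*(x+3) \<le> 2*((x+3)-2)^2*((x+3)-1)^3" for x::nat
  by (simp add: power2_eq_square power3_eq_cube algebra_simps)

lemma arith2:
  fixes m i :: nat
  assumes "m \<ge> 3" "i \<ge> 3"
  shows "(2*m-3)*m \<le> 2*(m-2)^2*(m-1)^(i::nat)"
proof -
  define x where "x = m - 3"
  have x: "m = x + 3" using assms(1) x_def by simp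
  have "(2*m-3)*m \<le> 2*(m-2)^2*(m-1)^3" unfolding x by (rule arith1)
  also have "(m-1)^3 \<le> (m-1)^i" using assms by (intro power_increasing) auto
  finally show ?thesis by simp
qed

lemma sq_split:
  assumes "finite T" "m \<ge> 2"
  shows "(\<Sum>a\<in>T. \<Sum>b\<in>T. (m - card {a,b})^2 * w a b)
       = (2*m-3) * (\<Sum>a\<in>T. w a a) + (m-2)^2 * (\<Sum>a\<in>T. \<Sum>b\<in>T. w a b)"
proof -
  have sq: "(m-1)^2 = (m-2)^2 + (2*m-3)"
  proof -
    obtain x where "m = x + 2" using assms(2) by (metis add.commute le_Suc_ex)
    then show ?thesis by (simp add: power2_eq_square algebra_simps)
  qed
  have "(\<Sum>b\<in>T. (m - card {a,b})^2 * w a b) = (\<Sum>b\<in>T. (m-2)^2 * w a b + (if b = a then (2*m-3) * w a b else 0))" for a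
    apply (rule sum.cong[OF refl])
    subgoal for b using sq by (cases "b = a") (simp_all add: distrib_right numeral_2_eq_2)
    done
  also have "\<dots> a = (m-2)^2 * (\<Sum>b\<in>T. w a b) + (if a \<in> T then (2*m-3) * w a a else 0)" for a
    using assms by (simp add: sum.distrib sum_distrib_left)
  finally have "(\<Sum>a\<in>T. \<Sum>b\<in>T. (m - card {a,b})^2 * w a b) = (\<Sum>a\<in>T. (m-2)^2 * (\<Sum>b\<in>T. w a b) + (2*m-3) * w a a)"
    by (intro sum.cong) auto
  then show ?thesis by (simp add: sum.distrib sum_distrib_left)
qed

lemma fin_arith:
  fixes c d m B P q Cy Pa :: nat
  assumes "m * B \<le> Cy" "m * P + 2 * q \<le> Pa" "c * m \<le> 2 * d * q"
  shows "c * (m * (B + 1)) + d * (m * P) \<le> c * Cy + d * Pa"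
proof -
  have e: "c * (m * (B + 1)) = c * (m * B) + c * m" by (simp add: algebra_simps)
  have 1: "c * (m * B) \<le> c * Cy" using assms(1) by (rule mult_left_mono) simp
  have "d * (m * P + 2 * q) \<le> d * Pa" using assms(2) by (rule mult_left_mono) simp
  then have 2: "d * (m * P) + 2 * d * q \<le> d * Pa" by (simp add: algebra_simps)
  show ?thesis unfolding e using 1 2 assms(3) by linarith
qed

lemma core:
  fixes S :: "'c set" and C :: "'d set"
  assumes "finite S" "card S = m" "finite C" "card C = m" "m \<ge> 3"
    "\<forall>X\<in>set Xs. finite X \<and> card X = m" "odd (length Xs)" "length Xs \<ge> 3"
  shows "(\<Sum>a\<in>C. \<Sum>b\<in>C. (m - card {a,b})^2 * wc (replicate (length Xs) C) a b)
       \<le> (\<Sum>a\<in>S. \<Sum>b\<in>S. (m - card {a,b})^2 * wc Xs a b)"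
proof -
  let ?i = "length Xs"
  let ?A = "fst (ABw m ?i)"
  let ?B = "snd (ABw m ?i)"
  have m2: "m \<ge> 2" using assms by simp
  have AB: "?A = ?B + 1" using ABw_rel[OF m2, of ?i] assms(7) by simp
  have ABs: "?A + (m-1) * ?B = (m-1)^Suc ?i" using ABw_sum[OF m2] .
  have Sne: "S \<noteq> {}" using assms by auto
  have c1: "(\<Sum>a\<in>C. wc (replicate ?i C) a a) = m * ?A"
    using assms wc_const[OF assms(3,4)] by simp
  have c2: "(\<Sum>a\<in>C. \<Sum>b\<in>C. wc (replicate ?i C) a b) = m * (m-1)^Suc ?i"
  proof -
    have "(\<Sum>b\<in>C. wc (replicate ?i C) a b) = (m-1)^Suc ?i" if a: "a \<in> C" for a
    proof -
      have "(\<Sum>b\<in>C. wc (replicate ?i C) a b) = (\<Sum>b\<in>C. if a = b then ?A else ?B)"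
        using wc_const[OF assms(3,4)] a by (intro sum.cong) auto
      also have "\<dots> = (if a = a then ?A else ?B) + (\<Sum>b\<in>C - {a}. if a = b then ?A else ?B)"
        by (rule sum.remove[OF assms(3) a])
      also have "(\<Sum>b\<in>C - {a}. if a = b then ?A else ?B) = (\<Sum>b\<in>C - {a}. ?B)"
        by (rule sum.cong) auto
      also have "\<dots> = (m-1) * ?B" using assms a by (simp add: card_Diff_singleton)
      finally show ?thesis using ABs by simp
    qed
    then show ?thesis using assms by simp
  qed
  have rhs: "(\<Sum>a\<in>C. \<Sum>b\<in>C. (m - card {a,b})^2 * wc (replicate ?i C) a b)
      = (2*m-3) * (m * ?A) + (m-2)^2 * (m * (m-1)^Suc ?i)"
    using sq_split[OF assms(3) m2] c1 c2 by simp
  have lhs: "(\<Sum>a\<in>S. \<Sum>b\<in>S. (m - card {a,b})^2 * wc Xs a b)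
      = (2*m-3) * (\<Sum>a\<in>S. wc Xs a a) + (m-2)^2 * (\<Sum>a\<in>S. \<Sum>b\<in>S. wc Xs a b)"
    using sq_split[OF assms(1) m2] .
  have path: "(\<Sum>a\<in>S. \<Sum>b\<in>S. wc Xs a b) \<ge> m * (m-1)^Suc ?i + cc (S # Xs @ [S]) * (m-1)^?i"
  proof -
    have "(\<Sum>a\<in>S. \<Sum>b\<in>S. wc Xs a b) = Pt S (Xs @ [S])"
      unfolding Pt_def using sum_wc[OF assms(1)] by simp
    moreover have "Pt S (Xs @ [S]) \<ge> m * (m-1)^length (Xs @ [S]) + cc (S # Xs @ [S]) * (m-1)^(length (Xs @ [S]) - 1)"
      by (rule Pt_lb) (use assms in auto)
    ultimately show ?thesis by simp
  qed
  have cycB: "(\<Sum>a\<in>S. wc Xs a a) \<ge> m * ?B"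
  proof -
    obtain \<psi> where psi: "\<forall>b. \<psi> b \<in> S"
      and tr: "\<forall>a\<in>S. \<forall>b. wc (replicate ?i S) (id a) (\<psi> b) \<le> wc Xs a b"
      using transport[OF assms(1,2) Sne assms(6), of id S] by auto
    have "m * ?B = (\<Sum>a\<in>S. ?B)" using assms by simp
    also have "\<dots> \<le> (\<Sum>a\<in>S. wc (replicate ?i S) a (\<psi> a))"
    proof (rule sum_mono)
      fix a assume a: "a \<in> S"
      show "?B \<le> wc (replicate ?i S) a (\<psi> a)"
        using wc_const[OF assms(1,2) a psi[rule_format, of a]] AB by auto
    qed
    also have "\<dots> \<le> (\<Sum>a\<in>S. wc Xs a a)" by (rule sum_mono) (use tr in auto)
    finally show ?thesis .
  qed
  show ?thesis
  proof (cases "\<forall>X\<in>set Xs. X = S")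
    case True
    then have "Xs = replicate ?i S" by (simp add: replicate_length_same)
    then have "\<forall>a\<in>S. wc Xs a a = ?A"
      using wc_const[OF assms(1,2)] by metis
    then have "(\<Sum>a\<in>S. wc Xs a a) = (\<Sum>a\<in>S. ?A)" by (intro sum.cong) auto
    then have cyc: "(\<Sum>a\<in>S. wc Xs a a) = m * ?A" using assms by simp
    have p: "m * (m-1)^Suc ?i \<le> (\<Sum>a\<in>S. \<Sum>b\<in>S. wc Xs a b)" using path by linarith
    show ?thesis unfolding lhs rhs cyc using p by (intro add_left_mono mult_left_mono) auto
  next
    case False
    then obtain X where "X \<in> set Xs" "X \<noteq> S" by auto
    then have cc2: "cc (S # Xs @ [S]) \<ge> 2" by (rule cc_two)
    have "2 * (m-1)^?i \<le> cc (S # Xs @ [S]) * (m-1)^?i" using cc2 by (rule mult_right_mono) simp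
    then have p2: "(\<Sum>a\<in>S. \<Sum>b\<in>S. wc Xs a b) \<ge> m * (m-1)^Suc ?i + 2 * (m-1)^?i"
      using path by linarith
    have ar: "(2*m-3)*m \<le> 2*(m-2)^2*(m-1)^?i" using arith2 assms by simp
    show ?thesis unfolding lhs rhs AB
      by (rule fin_arith[OF cycB p2 ar])
  qed
qed



definition wset :: "'c set list \<Rightarrow> 'c \<Rightarrow> 'c \<Rightarrow> 'c list set" where
  "wset Xs a b = {ys. list_all2 (\<in>) ys Xs \<and> successively (\<noteq>) (a # ys @ [b])}"

lemma wset_Nil: "wset [] a b = (if a = b then {} else {[]})"
  by (auto simp: wset_def)

lemma wset_Cons: "wset (X # Xs) a b = (\<Union>c\<in>X - {a}. (Cons c) ` wset Xs c b)"
proof -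
  have "ys \<in> wset (X # Xs) a b \<longleftrightarrow> (\<exists>c zs. ys = c # zs \<and> c \<in> X - {a} \<and> zs \<in> wset Xs c b)" for ys
    by (cases ys) (auto simp: wset_def list_all2_Cons2)
  then show ?thesis unfolding set_eq_iff by (auto simp: image_iff)
qed

lemma wset_card:
  assumes "\<forall>X\<in>set Xs. finite X"
  shows "finite (wset Xs a b) \<and> card (wset Xs a b) = wc Xs a b"
  using assms
proof (induction Xs arbitrary: a)
  case Nil then show ?case by (simp add: wset_Nil)
next
  case (Cons X Xs)
  have fX: "finite X" using Cons.prems by simp
  have ih: "finite (wset Xs c b) \<and> card (wset Xs c b) = wc Xs c b" for c
    using Cons by simp
  have fin: "finite (wset (X # Xs) a b)"
    unfolding wset_Cons using fX ih by auto
  have "card (wset (X # Xs) a b) = (\<Sum>c\<in>X - {a}. card ((Cons c) ` wset Xs c b))"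
    unfolding wset_Cons
    by (rule card_UN_disjoint) (use fX ih in auto)
  also have "\<dots> = (\<Sum>c\<in>X - {a}. wc Xs c b)"
    by (rule sum.cong[OF refl]) (simp add: card_image ih)
  finally show ?case using fin by simp
qed

lemma succ_map_upt:
  "successively P (map g [0..<Suc n]) \<longleftrightarrow> (\<forall>j<n. P (g j) (g (Suc j)))"
proof (induction n)
  case 0 then show ?case by simp
next
  case (Suc n)
  have "map g [0..<Suc (Suc n)] = map g [0..<Suc n] @ [g (Suc n)]" by simp
  then have "successively P (map g [0..<Suc (Suc n)]) \<longleftrightarrow>
      successively P (map g [0..<Suc n]) \<and> P (g n) (g (Suc n))"
    by (simp add: successively_append_iff conj_ac)
  then show ?case using Suc by (auto simp: less_Suc_eq)
qed

lemma lens_simps [simp]: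
  "theta_lens l1 l2 l3 1 = l1" "theta_lens l1 l2 l3 (Suc 0) = l1" "theta_lens l1 l2 l3 2 = l2" "theta_lens l1 l2 l3 3 = l3"
  by (auto simp: theta_lens_def)


lemma pv_simps:
  "theta_pv (theta_lens l1 l2 n) 3 j = (if j = 0 then (0,0) else if j = n then (0,1) else (3,j))"
  "theta_pv (theta_lens 2 l2 l3) 1 j = (if j = 0 then (0,0) else if j = 2 then (0,1) else (1,j))"
  "theta_pv (theta_lens l1 2 l3) 2 j = (if j = 0 then (0,0) else if j = 2 then (0,1) else (2,j))"
  by (auto simp: theta_pv_def theta_lens_def)

lemma theta_V_char:
  assumes "n \<ge> 2"
  shows "theta_V 2 2 n = {(0,0),(0,1),(1,1),(2,1)} \<union> {(3,j)|j. 0 < j \<and> j < n}"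
proof
  show "theta_V 2 2 n \<subseteq> {(0,0),(0,1),(1,1),(2,1)} \<union> {(3,j)|j. 0 < j \<and> j < n}"
  proof
    fix x assume "x \<in> theta_V 2 2 n"
    then obtain i j where ij: "i \<in> {1,2,3}" "j \<le> theta_lens 2 2 n i" "x = theta_pv (theta_lens 2 2 n) i j"
      unfolding theta_V_def by blast
    have "i = 1 \<or> i = 2 \<or> i = 3" using ij by auto
    then show "x \<in> {(0,0),(0,1),(1,1),(2,1)} \<union> {(3,j)|j. 0 < j \<and> j < n}"
    proof (elim disjE)
      assume i: "i = 1"
      then have "j = 0 \<or> j = 1 \<or> j = 2" using ij by auto
      then show ?thesis using ij i by (auto simp: theta_pv_def)
    next
      assume i: "i = 2"
      then have "j = 0 \<or> j = 1 \<or> j = 2" using ij by auto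
      then show ?thesis using ij i by (auto simp: theta_pv_def)
    next
      assume i: "i = 3"
      then show ?thesis using ij by (auto simp: theta_pv_def)
    qed
  qed
next
  have m: "theta_pv (theta_lens 2 2 n) i j \<in> theta_V 2 2 n" if "i \<in> {1,2,3}" "j \<le> theta_lens 2 2 n i" for i j
    unfolding theta_V_def using that by blast
  have "(0,0) \<in> theta_V 2 2 n" using m[of 1 0] by (simp add: theta_pv_def)
  moreover have "(0,1) \<in> theta_V 2 2 n" using m[of 1 2] by (simp add: theta_pv_def)
  moreover have "(1,1) \<in> theta_V 2 2 n" using m[of 1 1] by (simp add: theta_pv_def)
  moreover have "(2,1) \<in> theta_V 2 2 n" using m[of 2 1] by (simp add: theta_pv_def)
  moreover have "(3,j) \<in> theta_V 2 2 n" if "0 < j" "j < n" for j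
    using m[of 3 j] that by (simp add: theta_pv_def)
  ultimately show "{(0,0),(0,1),(1,1),(2,1)} \<union> {(3,j)|j. 0 < j \<and> j < n} \<subseteq> theta_V 2 2 n"
    by auto
qed


lemma proper_gen:
  "(\<forall>x y. {x,y} \<in> theta_E l1 l2 l3 \<longrightarrow> f x \<noteq> f y) \<longleftrightarrow>
   (\<forall>i\<in>{1,2,3}. \<forall>j<theta_lens l1 l2 l3 i.
       f (theta_pv (theta_lens l1 l2 l3) i j) \<noteq> f (theta_pv (theta_lens l1 l2 l3) i (Suc j)))"
  (is "?L \<longleftrightarrow> ?R")
proof
  assume L: ?L
  show ?R
  proof (intro ballI allI impI)
    fix i j assume "i \<in> {1,2,3}" "j < theta_lens l1 l2 l3 i"
    then have "{theta_pv (theta_lens l1 l2 l3) i j, theta_pv (theta_lens l1 l2 l3) i (Suc j)} \<in> theta_E l1 l2 l3"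
      unfolding theta_E_def by blast
    then show "f (theta_pv (theta_lens l1 l2 l3) i j) \<noteq> f (theta_pv (theta_lens l1 l2 l3) i (Suc j))"
      using L by blast
  qed
next
  assume R: ?R
  show ?L
  proof (intro allI impI)
    fix x y assume "{x,y} \<in> theta_E l1 l2 l3"
    then obtain i j where ij: "i \<in> {1,2,3}" "j < theta_lens l1 l2 l3 i"
      "{x,y} = {theta_pv (theta_lens l1 l2 l3) i j, theta_pv (theta_lens l1 l2 l3) i (Suc j)}"
      unfolding theta_E_def by blast
    then have "f (theta_pv (theta_lens l1 l2 l3) i j) \<noteq> f (theta_pv (theta_lens l1 l2 l3) i (Suc j))"
      using R by blast
    then show "f x \<noteq> f y" using ij(3) by (auto simp: doubleton_eq_iff)
  qed
qed

lemma all_less_2: "(\<forall>j<(2::nat). P j) \<longleftrightarrow> P 0 \<and> P 1"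
  by (auto simp: numeral_2_eq_2 less_Suc_eq)

lemma path_list:
  assumes "n \<ge> 1"
  shows "map (\<lambda>j. f (theta_pv (theta_lens l1 l2 n) 3 j)) [0..<Suc n] = f (0,0) # map (\<lambda>j. f (3,j)) [1..<n] @ [f (0,1)]"
proof -
  have "[0..<Suc n] = 0 # [1..<n] @ [n]" using assms by (simp add: upt_conv_Cons)
  moreover have "map (\<lambda>j. f (theta_pv (theta_lens l1 l2 n) 3 j)) [1..<n] = map (\<lambda>j. f (3,j)) [1..<n]"
    by (rule map_cong) (auto simp: pv_simps)
  ultimately show ?thesis using assms by (simp add: pv_simps)
qed

lemma proper_char:
  assumes "n \<ge> 2"
  shows "(\<forall>x y. {x,y} \<in> theta_E 2 2 n \<longrightarrow> f x \<noteq> f y) \<longleftrightarrow>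
    f (0,0) \<noteq> f (1,1) \<and> f (1,1) \<noteq> f (0,1) \<and> f (0,0) \<noteq> f (2,1) \<and> f (2,1) \<noteq> f (0,1) \<and>
    successively (\<noteq>) (f (0,0) # map (\<lambda>j. f (3,j)) [1..<n] @ [f (0,1)])"
proof -
  have "(\<forall>j<n. f (theta_pv (theta_lens 2 2 n) 3 j) \<noteq> f (theta_pv (theta_lens 2 2 n) 3 (Suc j)))
     \<longleftrightarrow> successively (\<noteq>) (f (0,0) # map (\<lambda>j. f (3,j)) [1..<n] @ [f (0,1)])"
    using succ_map_upt[of "(\<noteq>)" "\<lambda>j. f (theta_pv (theta_lens 2 2 n) 3 j)" n] path_list[of n f 2 2] assms
    by simp
  moreover have "(\<forall>j<2. f (theta_pv (theta_lens 2 2 n) 1 j) \<noteq> f (theta_pv (theta_lens 2 2 n) 1 (Suc j)))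
      \<longleftrightarrow> f (0,0) \<noteq> f (1,1) \<and> f (1,1) \<noteq> f (0,1)"
    unfolding all_less_2 by (simp add: theta_pv_def)
  moreover have "(\<forall>j<2. f (theta_pv (theta_lens 2 2 n) 2 j) \<noteq> f (theta_pv (theta_lens 2 2 n) 2 (Suc j)))
      \<longleftrightarrow> f (0,0) \<noteq> f (2,1) \<and> f (2,1) \<noteq> f (0,1)"
    unfolding all_less_2 by (simp add: theta_pv_def)
  ultimately show ?thesis unfolding proper_gen by (simp add: conj_ac)
qed


lemma count_formula:
  fixes L :: "nat \<times> nat \<Rightarrow> 'c set"
  assumes n: "n \<ge> 2" and fin: "\<forall>w\<in>theta_V 2 2 n. finite (L w)"
  shows "list_color_count (theta_V 2 2 n) (theta_E 2 2 n) L
    = (\<Sum>a\<in>L (0,0). \<Sum>b\<in>L (0,1). card (L (1,1) - {a,b}) * (card (L (2,1) - {a,b}) * wc (map (\<lambda>j. L (3,j)) [1..<n]) a b))"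
proof -
  define V where "V = theta_V 2 2 n"
  define Xs where "Xs = map (\<lambda>j. L (3,j)) [1..<n]"
  define F :: "(nat \<times> nat \<Rightarrow> 'c) \<Rightarrow> 'c \<times> 'c \<times> 'c \<times> 'c \<times> 'c list"
    where "F f = (f (0,0), f (0,1), f (1,1), f (2,1), map (\<lambda>j. f (3,j)) [1..<n])" for f
  define T where "T = (SIGMA a:L (0,0). SIGMA b:L (0,1). (L (1,1) - {a,b}) \<times> (L (2,1) - {a,b}) \<times> wset Xs a b)"
  define P where "P = proper_list_colorings V (theta_E 2 2 n) L"
  have Vc: "V = {(0,0),(0,1),(1,1),(2,1)} \<union> {(3,j)|j. 0 < j \<and> j < n}"
    using theta_V_char[OF n] V_def by simp
  have memP: "f \<in> P \<longleftrightarrow> (\<forall>w\<in>V. f w \<in> L w) \<and> (\<forall>w. w \<notin> V \<longrightarrow> f w = undefined) \<and>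
    f (0,0) \<noteq> f (1,1) \<and> f (1,1) \<noteq> f (0,1) \<and> f (0,0) \<noteq> f (2,1) \<and> f (2,1) \<noteq> f (0,1) \<and>
    successively (\<noteq>) (f (0,0) # map (\<lambda>j. f (3,j)) [1..<n] @ [f (0,1)])" for f
    unfolding P_def proper_list_colorings_def using proper_char[OF n, of f] by simp
  have inV: "(\<forall>w\<in>V. f w \<in> L w) \<longleftrightarrow> f (0,0) \<in> L (0,0) \<and> f (0,1) \<in> L (0,1) \<and> f (1,1) \<in> L (1,1)
     \<and> f (2,1) \<in> L (2,1) \<and> (\<forall>j. 0 < j \<and> j < n \<longrightarrow> f (3,j) \<in> L (3,j))" for f
    unfolding Vc by auto
  have la: "list_all2 (\<in>) (map (\<lambda>j. f (3,j)) [1..<n]) Xs \<longleftrightarrow> (\<forall>j. 0 < j \<and> j < n \<longrightarrow> f (3,j) \<in> L (3,j))" for f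
    unfolding Xs_def by (auto simp: list_all2_map1 list_all2_map2 list_all2_same)
  have finXs: "\<forall>X\<in>set Xs. finite X" using fin unfolding Xs_def theta_V_char[OF n] by auto
  have inj: "inj_on F P"
  proof
    fix f g assume f: "f \<in> P" and g: "g \<in> P" and e: "F f = F g"
    show "f = g"
    proof
      fix x
      show "f x = g x"
      proof (cases "x \<in> V")
        case False
        have "\<forall>w. w \<notin> V \<longrightarrow> f w = undefined" "\<forall>w. w \<notin> V \<longrightarrow> g w = undefined"
          using f g memP by blast+
        then show ?thesis using False by (metis (no_types))
      next
        case True
        have m: "map (\<lambda>j. f (3,j)) [1..<n] = map (\<lambda>j. g (3,j)) [1..<n]" using e by (simp add: F_def)
        show ?thesis
        proof (cases "fst x = 3")
          case True
          then obtain j where "x = (3,j)" "0 < j" "j < n" using \<open>x \<in> V\<close> unfolding Vc by auto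
          then show ?thesis using m by (auto simp: map_eq_conv)
        next
          case False
          then show ?thesis using \<open>x \<in> V\<close> e unfolding Vc F_def by auto
        qed
      qed
    qed
  qed
  have img1: "F ` P \<subseteq> T"
  proof
    fix t assume "t \<in> F ` P"
    then obtain f where f: "f \<in> P" "t = F f" by auto
    show "t \<in> T" using f memP[of f] inV[of f] la[of f] unfolding T_def F_def wset_def by auto
  qed
  have img2: "T \<subseteq> F ` P"
  proof
    fix t assume "t \<in> T"
    then obtain a b c1 c2 ys where t: "t = (a,b,c1,c2,ys)" and a: "a \<in> L (0,0)" and b: "b \<in> L (0,1)"
      and c1: "c1 \<in> L (1,1) - {a,b}" and c2: "c2 \<in> L (2,1) - {a,b}" and ys: "ys \<in> wset Xs a b"
      unfolding T_def by blast
    have lys: "list_all2 (\<in>) ys Xs" and sys: "successively (\<noteq>) (a # ys @ [b])"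
      using ys unfolding wset_def by auto
    have len: "length ys = n - 1" using list_all2_lengthD[OF lys] by (simp add: Xs_def)
    define g :: "nat \<times> nat \<Rightarrow> 'c" where "g x = (if x = (0,0) then a else if x = (0,1) then b else if x = (1,1) then c1
      else if x = (2,1) then c2 else if fst x = 3 \<and> 0 < snd x \<and> snd x < n then ys ! (snd x - 1) else undefined)" for x
    have gm: "map (\<lambda>j. g (3,j)) [1..<n] = ys"
      by (rule nth_equalityI) (auto simp: len g_def)
    have g3: "\<forall>j. 0 < j \<and> j < n \<longrightarrow> g (3,j) \<in> L (3,j)"
      using la[of g] gm lys by simp
    have "g \<in> P"
      unfolding memP inV gm using a b c1 c2 g3 sys
      by (auto simp: g_def Vc)
    moreover have "F g = t" unfolding F_def t gm by (simp add: g_def)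
    ultimately show "t \<in> F ` P" by blast
  qed
  have "card P = card T" using card_image[OF inj] img1 img2 by auto
  also have "card T = (\<Sum>a\<in>L (0,0). \<Sum>b\<in>L (0,1). card (L (1,1) - {a,b}) * (card (L (2,1) - {a,b}) * wc Xs a b))"
    unfolding T_def using fin wset_card[OF finXs] theta_V_char[OF n]
    by (simp add: card_cartesian_product)
  finally show ?thesis unfolding list_color_count_def P_def V_def Xs_def .
qed



theorem lemma18:
  fixes k m :: nat and L :: "nat \<times> nat \<Rightarrow> 'c set"
  assumes "k \<ge> 2" and "m \<ge> 3"
    and "is_m_assignment (theta_V 2 2 (2*k)) m L"
    and "L theta_u = L theta_v"
  shows "list_color_count (theta_V 2 2 (2*k)) (theta_E 2 2 (2*k)) L
         \<ge> chrom_poly (theta_V 2 2 (2*k)) (theta_E 2 2 (2*k)) m"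
proof -
  define n where "n = 2*k"
  have n: "n \<ge> 2" using assms(1) n_def by simp
  define S where "S = L (0,0)"
  define C where "C = {0..<m}"
  define Xs where "Xs = map (\<lambda>j. L (3,j)) [1..<n]"
  have Vc: "theta_V 2 2 n = {(0,0),(0,1),(1,1),(2,1)} \<union> {(3,j)|j. 0 < j \<and> j < n}"
    by (rule theta_V_char[OF n])
  have fc: "\<forall>w\<in>theta_V 2 2 n. finite (L w) \<and> card (L w) = m"
    using assms(3) unfolding is_m_assignment_def n_def by simp
  have fS: "finite S" "card S = m" using fc unfolding Vc S_def by auto
  have f11: "finite (L (1,1))" "card (L (1,1)) = m" using fc unfolding Vc by auto
  have f21: "finite (L (2,1))" "card (L (2,1)) = m" using fc unfolding Vc by auto
  have LS: "L (0,1) = S" using assms(4) S_def by simp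
  have fXs: "\<forall>X\<in>set Xs. finite X \<and> card X = m" using fc unfolding Vc Xs_def by auto
  have lenXs: "length Xs = n - 1" by (simp add: Xs_def)
  have oddXs: "odd (length Xs)" using lenXs n_def assms(1) by simp
  have len3: "length Xs \<ge> 3" using lenXs n_def assms(1) by simp
  have cL: "list_color_count (theta_V 2 2 n) (theta_E 2 2 n) L
    = (\<Sum>a\<in>S. \<Sum>b\<in>S. card (L (1,1) - {a,b}) * (card (L (2,1) - {a,b}) * wc Xs a b))"
    using count_formula[OF n, of L] fc LS unfolding S_def Xs_def by simp
  have "(\<Sum>a\<in>S. \<Sum>b\<in>S. (m - card {a,b})^2 * wc Xs a b)
      \<le> (\<Sum>a\<in>S. \<Sum>b\<in>S. card (L (1,1) - {a,b}) * (card (L (2,1) - {a,b}) * wc Xs a b))"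
  proof (intro sum_mono)
    fix a b
    have "m - card {a,b} \<le> card (L (1,1) - {a,b})"
      using diff_card_le_card_Diff[of "{a,b}" "L (1,1)"] f11 by simp
    moreover have "m - card {a,b} \<le> card (L (2,1) - {a,b})"
      using diff_card_le_card_Diff[of "{a,b}" "L (2,1)"] f21 by simp
    ultimately show "(m - card {a,b})^2 * wc Xs a b \<le> card (L (1,1) - {a,b}) * (card (L (2,1) - {a,b}) * wc Xs a b)"
      by (simp add: power2_eq_square mult_mono)
  qed
  then have ge: "(\<Sum>a\<in>S. \<Sum>b\<in>S. (m - card {a,b})^2 * wc Xs a b) \<le> list_color_count (theta_V 2 2 n) (theta_E 2 2 n) L"
    using cL by simp
  have fCv: "\<forall>w\<in>theta_V 2 2 n. finite ((\<lambda>_. C) w)" by (simp add: C_def)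
  have "chrom_poly (theta_V 2 2 n) (theta_E 2 2 n) m
     = (\<Sum>a\<in>C. \<Sum>b\<in>C. card (C - {a,b}) * (card (C - {a,b}) * wc (map (\<lambda>j. C) [1..<n]) a b))"
    unfolding chrom_poly_def using count_formula[OF n, of "\<lambda>_. C"] fCv by (simp add: C_def)
  also have "\<dots> = (\<Sum>a\<in>C. \<Sum>b\<in>C. (m - card {a,b})^2 * wc (replicate (length Xs) C) a b)"
  proof (intro sum.cong refl)
    fix a b assume "a \<in> C" "b \<in> C"
    then have "card (C - {a,b}) = m - card {a,b}" by (simp add: card_Diff_subset C_def)
    moreover have "map (\<lambda>j. C) [1..<n] = replicate (length Xs) C" by (simp add: lenXs map_replicate_const)
    ultimately show "card (C - {a,b}) * (card (C - {a,b}) * wc (map (\<lambda>j. C) [1..<n]) a b)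
        = (m - card {a,b})^2 * wc (replicate (length Xs) C) a b"
      by (simp add: power2_eq_square)
  qed
  also have "\<dots> \<le> (\<Sum>a\<in>S. \<Sum>b\<in>S. (m - card {a,b})^2 * wc Xs a b)"
    by (rule core[OF fS _ _ assms(2) fXs oddXs len3]) (auto simp: C_def)
  finally show ?thesis using ge unfolding n_def by simp
qed

end
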